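(* Let $\rho_1\in(0,1)$, $\rho_2\in(0,1-\rho_1)$. In a sample $\eta$ of $\mu^{\rho_1,\rho_2}$ there exists, with probability $1$, a site $i\in\mathbb{Z}$ with $\eta(i)=2$ (a second class particle).
   Context: $\mu^{\rho_1,\rho_2}$ (queueing construction): let $(a(i))_{i\in\mathbb{Z}}$, $(s(i))_{i\in\mathbb{Z}}$ be independent families of i.i.d. Bernoulli variables with parameters $\rho_1$ and $\rho_1+\rho_2$; $\mathcal{A}_{[i,j]}=\sum_{k=i}^ja(k)$, $\mathcal{S}_{[i,j]}=\sum_{k=i}^js(k)$ (empty sums $0$); $Q_i=\sup_{j\ge i-1}(\mathcal{A}_{[i,j]}-\mathcal{S}_{[i,j]})$; $d(i)=1$ iff $s(i)=1$ and ($a(i)=1$ or $Q_{i+1}\ge1$) (equivalently, each $i$ with $a(i)=1$ is matched to the largest $j\le i$ with $s(j)=1$ not yet matched, and $d=1$ at matched sites). Set $\eta(i)=1$ if $d(i)=1$, $\eta(i)=2$ if $s(i)=1,d(i)=0$, $\eta(i)=+\infty$ if $s(i)=0$; $\mu^{\rho_1,\rho_2}$ is the law of $\eta$. *)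

theory Defs
  imports "HOL-Probability.Probability" "HOL-Library.Extended_Nat"
begin

text \<open>Queueing construction of the two-type measure. Arrivals a and services s are
  Bernoulli variables encoded as booleans (True = 1).\<close>

definition cnt :: "(int \<Rightarrow> bool) \<Rightarrow> int \<Rightarrow> int \<Rightarrow> int" where
  "cnt x i j = (\<Sum>k\<in>{i..j}. of_bool (x k))"

definition queueQ :: "(int \<Rightarrow> bool) \<Rightarrow> (int \<Rightarrow> bool) \<Rightarrow> int \<Rightarrow> ereal" where
  "queueQ a s i = (SUP j\<in>{i - 1..}. ereal (of_int (cnt a i j - cnt s i j)))"

definition departure :: "(int \<Rightarrow> bool) \<Rightarrow> (int \<Rightarrow> bool) \<Rightarrow> int \<Rightarrow> bool" where
  "departure a s i \<longleftrightarrow> s i \<and> (a i \<or> queueQ a s (i + 1) \<ge> 1)"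

definition config :: "(int \<Rightarrow> bool) \<Rightarrow> (int \<Rightarrow> bool) \<Rightarrow> int \<Rightarrow> enat" where
  "config a s i = (if departure a s i then 1 else if s i then 2 else \<infinity>)"

definition arr_serv :: "('w \<Rightarrow> int \<Rightarrow> bool) \<Rightarrow> ('w \<Rightarrow> int \<Rightarrow> bool) \<Rightarrow> int + int \<Rightarrow> 'w \<Rightarrow> bool" where
  "arr_serv a s k = (case k of Inl i \<Rightarrow> (\<lambda>w. a w i) | Inr i \<Rightarrow> (\<lambda>w. s w i))"

end

theory Submission imports Defs begin
lemma cnt_split:
  assumes "lo \<le> i + 1" "i \<le> j"
  shows "cnt x lo j = cnt x lo i + cnt x (i+1) j"
proof -
  have "{lo..j} = {lo..i} \<union> {i+1..j}" using assms by auto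
  moreover have "{lo..i} \<inter> {i+1..j} = {}" by auto
  ultimately show ?thesis unfolding cnt_def by (metis finite_atLeastAtMost_int sum.union_disjoint)
qed

lemma cnt_Suc: "cnt x 1 (int (Suc n)) = cnt x 1 (int n) + of_bool (x (int n + 1))"
proof -
  have "cnt x 1 (int n + 1) = cnt x 1 (int n) + cnt x (int n + 1) (int n + 1)"
    by (rule cnt_split) auto
  moreover have "cnt x (int n + 1) (int n + 1) = of_bool (x (int n + 1))"
    unfolding cnt_def by simp
  ultimately show ?thesis by (simp add: add.commute)
qed

lemma cnt_0: "cnt x 1 0 = 0" unfolding cnt_def by simp

lemma det:
  fixes a s :: "int \<Rightarrow> bool"
  assumes ev: "eventually (\<lambda>n. cnt s 1 (int n) - cnt a 1 (int n) > 0) sequentially"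
  shows "\<exists>i. config a s i = 2"
proof -
  define W where "W n = cnt s 1 (int n) - cnt a 1 (int n)" for n
  obtain N where N: "\<And>n. n \<ge> N \<Longrightarrow> W n > 0" using ev unfolding W_def eventually_sequentially by blast
  have W0: "W 0 = 0" unfolding W_def by (simp add: cnt_0)
  have WS: "W (Suc n) = W n + of_bool (s (int n + 1)) - of_bool (a (int n + 1))" for n
    unfolding W_def cnt_Suc by simp
  define m where "m = Min (W ` {0..N})"
  have mle: "m \<le> W k" if "k \<le> N" for k unfolding m_def using that by (intro Min_le) auto
  have m0: "m \<le> 0" using mle[of 0] W0 by simp
  have mall: "m \<le> W k" for k
    using mle[of k] N[of k] m0 by (cases "k \<le> N") auto
  have "m \<in> W ` {0..N}" unfolding m_def by (intro Min_in) auto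
  then have ne: "{k\<in>{0..N}. W k = m} \<noteq> {}" by auto
  define n1 where "n1 = Max {k\<in>{0..N}. W k = m}"
  have "n1 \<in> {k\<in>{0..N}. W k = m}" unfolding n1_def using ne by (intro Max_in) auto
  then have n1N: "n1 \<le> N" and Wn1: "W n1 = m" by auto
  have gt: "W k > m" if "n1 < k" for k
  proof (cases "k \<le> N")
    case True
    have "W k \<noteq> m"
    proof
      assume "W k = m"
      then have "k \<le> n1" unfolding n1_def using True by (intro Max_ge) auto
      then show False using that by simp
    qed
    then show ?thesis using mall[of k] by simp
  next
    case False then show ?thesis using N[of k] m0 by simp
  qed
  have "W (Suc n1) > W n1" using gt[of "Suc n1"] Wn1 by simp
  then have sa: "s (int n1 + 1)" "\<not> a (int n1 + 1)" and WS1: "W (Suc n1) = m + 1"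
    using WS[of n1] Wn1 by (auto split: if_splits)
  define i where "i = int n1 + 1"
  have Q: "queueQ a s (i + 1) \<le> 0"
    unfolding queueQ_def
  proof (rule SUP_least)
    fix j assume j: "j \<in> {i + 1 - 1..}"
    then have ji: "j \<ge> i" by simp
    define k where "k = nat j"
    have jk: "j = int k" unfolding k_def using ji i_def by simp
    have kn: "n1 < k" using ji jk i_def by simp
    have "cnt s 1 j = cnt s 1 i + cnt s (i+1) j" "cnt a 1 j = cnt a 1 i + cnt a (i+1) j"
      using ji i_def cnt_split[of 1 i j] by simp_all
    moreover have "W k = cnt s 1 j - cnt a 1 j" unfolding W_def jk ..
    moreover have "W (Suc n1) = cnt s 1 i - cnt a 1 i" unfolding W_def i_def by (metis of_nat_Suc add.commute)
    ultimately have "cnt a (i+1) j - cnt s (i+1) j = W (Suc n1) - W k" by simp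
    also have "\<dots> \<le> 0" using gt[OF kn] WS1 by simp
    finally show "ereal (of_int (cnt a (i + 1) j - cnt s (i + 1) j)) \<le> 0" by simp
  qed
  have "queueQ a s (i+1) < 1" using Q by (rule le_less_trans) simp
  then have "\<not> departure a s i"
    unfolding departure_def using sa i_def by simp
  then have "config a s i = 2" unfolding config_def using sa i_def by simp
  then show ?thesis by blast
qed
theorem lemmaC1:
  fixes M :: "'w measure" and a s :: "'w \<Rightarrow> int \<Rightarrow> bool" and \<rho>1 \<rho>2 :: real
  assumes "prob_space M"
    and "0 < \<rho>1" "\<rho>1 < 1" "0 < \<rho>2" "\<rho>2 < 1 - \<rho>1"
    and "prob_space.indep_vars M (\<lambda>_. count_space UNIV) (arr_serv a s) UNIV"
    and "\<And>i. measure M {w \<in> space M. a w i} = \<rho>1"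
    and "\<And>i. measure M {w \<in> space M. s w i} = \<rho>1 + \<rho>2"
  shows "AE w in M. \<exists>i. config (a w) (s w) i = 2"
proof -
  interpret prob_space M by fact
  note indep = assms(6)
  have rv: "random_variable (count_space UNIV) (arr_serv a s k)" for k
    using indep unfolding indep_vars_def by blast
  have ma[measurable]: "(\<lambda>w. a w i) \<in> M \<rightarrow>\<^sub>M count_space UNIV" for i
    using rv[of "Inl i"] by (simp add: arr_serv_def)
  have ms[measurable]: "(\<lambda>w. s w i) \<in> M \<rightarrow>\<^sub>M count_space UNIV" for i
    using rv[of "Inr i"] by (simp add: arr_serv_def)
  have mra[measurable]: "(\<lambda>w. of_bool (a w i) :: real) \<in> borel_measurable M" for i
    using measurable_compose[OF ma[of i], of "\<lambda>b. of_bool b :: real" borel] by simp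
  have mrs[measurable]: "(\<lambda>w. of_bool (s w i) :: real) \<in> borel_measurable M" for i
    using measurable_compose[OF ms[of i], of "\<lambda>b. of_bool b :: real" borel] by simp
  have Ea: "expectation (\<lambda>w. of_bool (a w i) :: real) = \<rho>1" for i
  proof -
    have "expectation (\<lambda>w. of_bool (a w i) :: real) = expectation (indicator {w \<in> space M. a w i})"
      by (intro Bochner_Integration.integral_cong) (auto simp: indicator_def)
    also have "\<dots> = \<rho>1" using assms(7)[of i] by simp
    finally show ?thesis .
  qed
  have Es: "expectation (\<lambda>w. of_bool (s w i) :: real) = \<rho>1 + \<rho>2" for i
  proof -
    have "expectation (\<lambda>w. of_bool (s w i) :: real) = expectation (indicator {w \<in> space M. s w i})"
      by (intro Bochner_Integration.integral_cong) (auto simp: indicator_def)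
    also have "\<dots> = \<rho>1 + \<rho>2" using assms(8)[of i] by simp
    finally show ?thesis .
  qed
  define f :: "int + int \<Rightarrow> bool \<Rightarrow> real" where
    "f k = (case k of Inl _ \<Rightarrow> (\<lambda>b. - of_bool b) | Inr _ \<Rightarrow> (\<lambda>b. of_bool b))" for k
  define Y where "Y k w = f k (arr_serv a s k w)" for k w
  define lo :: "int + int \<Rightarrow> real" where "lo k = (case k of Inl _ \<Rightarrow> -1 | Inr _ \<Rightarrow> 0)" for k
  define hi :: "int + int \<Rightarrow> real" where "hi k = (case k of Inl _ \<Rightarrow> 0 | Inr _ \<Rightarrow> 1)" for k
  have Yind: "indep_vars (\<lambda>_. borel) Y UNIV"
    unfolding Y_def by (rule indep_vars_compose2[OF indep]) auto
  have mY[measurable]: "Y k \<in> borel_measurable M" for k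
    using Yind unfolding indep_vars_def by blast
  define I where "I n = Inl ` {1..int n} \<union> Inr ` {1..int n}" for n :: nat
  define W where "W w n = cnt (s w) 1 (int n) - cnt (a w) 1 (int n)" for w n
  have sumI: "(\<Sum>k\<in>I n. g k) = (\<Sum>i\<in>{1..int n}. g (Inl i)) + (\<Sum>i\<in>{1..int n}. g (Inr i))"
    for n and g :: "int + int \<Rightarrow> real"
    unfolding I_def
    by (subst sum.union_disjoint) (auto simp: sum.reindex)
  have sumY: "(\<Sum>k\<in>I n. Y k w) = real_of_int (W w n)" for n w
    unfolding sumI W_def cnt_def
    by (simp add: Y_def f_def arr_serv_def sum_negf)
  define c where "c = \<rho>2^2 / 4"
  have c: "c > 0" unfolding c_def using assms by simp
  define A where "A n = {w \<in> space M. real_of_int (W w n) \<le> real n * \<rho>2 / 2}" for n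
  have Ameas[measurable]: "A n \<in> sets M" for n
  proof -
    have "A n = {w \<in> space M. (\<Sum>k\<in>I n. Y k w) \<le> real n * \<rho>2 / 2}"
      unfolding A_def sumY ..
    also have "\<dots> \<in> sets M"
      by measurable
    finally show ?thesis .
  qed
  have bound: "prob (A n) \<le> exp (- c * real n)" for n
  proof (cases "n = 0")
    case True then show ?thesis by simp
  next
    case False
    interpret H: Hoeffding_ineq M "I n" Y lo hi "real n * \<rho>2"
    proof unfold_locales
      show "finite (I n)" unfolding I_def by simp
      show "indep_vars (\<lambda>_. borel) Y (I n)" using Yind by (rule indep_vars_subset) auto
      show "AE x in M. Y i x \<in> {lo i..hi i}" if "i \<in> I n" for i
        by (auto simp: Y_def f_def lo_def hi_def split: sum.splits)
      show "real n * \<rho>2 \<equiv> \<Sum>i\<in>I n. expectation (Y i)"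
      proof (rule eq_reflection)
        have "expectation (Y (Inl i)) = - \<rho>1" for i
        proof -
          have "Y (Inl i) = (\<lambda>w. - of_bool (a w i))" by (simp add: fun_eq_iff Y_def f_def arr_serv_def)
          then show ?thesis using Ea[of i] by simp
        qed
        moreover have "expectation (Y (Inr i)) = \<rho>1 + \<rho>2" for i
        proof -
          have "Y (Inr i) = (\<lambda>w. of_bool (s w i))" by (simp add: fun_eq_iff Y_def f_def arr_serv_def)
          then show ?thesis using Es[of i] by simp
        qed
        ultimately show "real n * \<rho>2 = (\<Sum>i\<in>I n. expectation (Y i))"
          unfolding sumI by (simp add: algebra_simps)
      qed
    qed
    have sq: "(\<Sum>i\<in>I n. (hi i - lo i)\<^sup>2) = 2 * real n"
      unfolding sumI by (simp add: lo_def hi_def)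
    have "prob (A n) = prob {x\<in>space M. (\<Sum>i\<in>I n. Y i x) \<le> real n * \<rho>2 - real n * \<rho>2 / 2}"
      unfolding A_def sumY by (simp add: mult.commute)
    also have "\<dots> \<le> exp (-2 * (real n * \<rho>2 / 2)\<^sup>2 / (\<Sum>i\<in>I n. (hi i - lo i)\<^sup>2))"
      by (rule H.Hoeffding_ineq_le) (use assms False sq in auto)
    also have "-2 * (real n * \<rho>2 / 2)\<^sup>2 / (\<Sum>i\<in>I n. (hi i - lo i)\<^sup>2) = - c * real n"
      unfolding sq c_def using False by (simp add: field_simps power2_eq_square)
    finally show ?thesis .
  qed
  have summ: "summable (\<lambda>n. measure M (A n))"
  proof (rule summable_comparison_test)
    show "\<exists>N. \<forall>n\<ge>N. norm (measure M (A n)) \<le> exp (- c) ^ n"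
      using bound by (simp add: exp_of_nat_mult[symmetric] mult.commute)
    show "summable (\<lambda>n. exp (- c) ^ n)" using c by (intro summable_geometric) simp
  qed
  have "AE w in M. eventually (\<lambda>n. w \<in> space M - A n) sequentially"
    by (rule borel_cantelli_AE1) (auto simp: summ less_top[symmetric])
  then show ?thesis
  proof (rule eventually_mono)
    fix w assume "eventually (\<lambda>n. w \<in> space M - A n) sequentially"
    then have "eventually (\<lambda>n. cnt (s w) 1 (int n) - cnt (a w) 1 (int n) > 0) sequentially"
    proof (rule eventually_mono)
      fix n assume "w \<in> space M - A n"
      then have "real_of_int (W w n) > real n * \<rho>2 / 2" unfolding A_def by auto
      moreover have "real n * \<rho>2 / 2 \<ge> 0" using assms by simp
      ultimately show "cnt (s w) 1 (int n) - cnt (a w) 1 (int n) > 0" unfolding W_def by linarith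
    qed
    then show "\<exists>i. config (a w) (s w) i = 2" by (rule det)
  qed
qed
end
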